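(* Let $V_0,V_1,V'_1,V'_2,V'_3,\ldots$ be vector bundles and let $$V_0\xrightarrow{K'_0}V'_1\xrightarrow{K'_1}V'_2\xrightarrow{K'_2}V'_3\xrightarrow{K'_3}V'_4\xrightarrow{K'_4}\cdots$$ be a full compatibility complex of differential operators. Let $K_0\colon V_0\to V_1$, $C_1\colon V_1\to V'_1$, $D_1\colon V'_1\to V_1$, $H'_1\colon V'_2\to V'_1$ be differential operators such that $C_1\circ K_0=K'_0$, $D_1\circ K'_0=K_0$ (i.e. the first square with $C_0=D_0=\mathrm{id}$, $H_0=H'_0=0$ is an equivalence up to homotopy), and $$\mathrm{id}-C_1\circ D_1=H'_1\circ K'_1 .$$ Define $K_1\colon V_1\to V_1\oplus V'_2$, $K_1=\bigl(\mathrm{id}-D_1C_1,\ K'_1C_1\bigr)$; $K_2\colon V_1\oplus V'_2\to V'_1\oplus V'_3$, $K_2(x,y)=\bigl(C_1x-H'_1y,\ K'_2y\bigr)$; $K_3\colon V'_1\oplus V'_3\to V'_4$, $K_3(x,y)=K'_3y$; and $K_l=K'_l\colon V'_l\to V'_{l+1}$ for $l\ge4$. Then $K_0,K_1,K_2,\ldots$ is a full compatibility complex for $K_0$. Moreover, together with the vertical maps $C_0=D_0=\mathrm{id}$, $C_1$, $D_1$, $C_2=(0\ \mathrm{id})\colon V_1\oplus V'_2\to V'_2$, $D_2=\bigl(D_1H'_1,\ \mathrm{id}-K'_1H'_1\bigr)\colon V'_2\to V_1\oplus V'_2$, $C_3=(0\ \mathrm{id})\colon V'_1\oplus V'_3\to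 V'_3$, $D_3=(0,\mathrm{id})\colon V'_3\to V'_1\oplus V'_3$, $C_l=D_l=\mathrm{id}$ for $l\ge4$, and homotopies $H_0=H'_0=0$, $H_1=(\mathrm{id}\ 0)\colon V_1\oplus V'_2\to V_1$, $H'_1$ as given, $H_2(x,y)=(D_1x,\,-K'_1x)\colon V'_1\oplus V'_3\to V_1\oplus V'_2$, $H'_2=0$, and $H_l=H'_l=0$ for $l\ge3$, the top complex $(K_l)$ and the bottom complex $(K'_l)$ are equivalent up to homotopy.
   Context: For a linear differential operator $K$, a differential operator $L$ with $L\circ K=0$ is a compatibility operator for $K$; it is complete if every differential operator $L'$ with $L'\circ K=0$ factors as $L'=L''\circ L$ for some differential operator $L''$. A complex of differential operators $K_l$, $l=0,1,\ldots$, is a (full) compatibility complex for $K$ if $K_0=K$ and each $K_l$ ($l\ge1$) is a complete compatibility operator for $K_{l-1}$. Given complexes $(K_l)$ and $(K'_l)$ (with $K_{-1}=K'_{-1}=H_{-1}=H'_{-1}=0$), an equivalence up to homotopy consists of maps $C_l$ (top to bottom) and $D_l$ (bottom to top) that are cochain maps ($K'_l C_l=C_{l+1}K_l$, $K_lD_l=D_{l+1}K'_l$) together with maps $H_l$ (from degree $l+1$ to degree $l$ of the top complex) and $H'_l$ (same for the bottom complex) such that $D_lC_l=\mathrm{id}-K_{l-1}H_{l-1}-H_lK_l$ and $C_lD_l=\mathrm{id}-K'_{l-1}H'_{l-1}-H'_lK'_l$ for all $l$. *)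

theory Defs
  imports Main
begin

text \<open>Abstract setting: vector bundles are objects of type 'o, differential operators
  are morphisms of type 'm, organised as a preadditive category with biproducts
  (direct sums of bundles).  cmp g f denotes the composite g after f.\<close>

record ('o, 'm) acat =
  hom  :: "'o \<Rightarrow> 'o \<Rightarrow> 'm set"
  cmp  :: "'m \<Rightarrow> 'm \<Rightarrow> 'm"
  pls  :: "'m \<Rightarrow> 'm \<Rightarrow> 'm"
  ngt  :: "'m \<Rightarrow> 'm"
  zro  :: "'o \<Rightarrow> 'o \<Rightarrow> 'm"
  idm  :: "'o \<Rightarrow> 'm"
  dsum :: "'o \<Rightarrow> 'o \<Rightarrow> 'o"
  inj1 :: "'o \<Rightarrow> 'o \<Rightarrow> 'm"
  inj2 :: "'o \<Rightarrow> 'o \<Rightarrow> 'm"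
  prj1 :: "'o \<Rightarrow> 'o \<Rightarrow> 'm"
  prj2 :: "'o \<Rightarrow> 'o \<Rightarrow> 'm"

definition additive_cat :: "('o, 'm) acat \<Rightarrow> bool" where
  "additive_cat Cat \<longleftrightarrow>
    (\<forall>A B C f g. f \<in> hom Cat A B \<longrightarrow> g \<in> hom Cat B C \<longrightarrow> cmp Cat g f \<in> hom Cat A C) \<and>
    (\<forall>A. idm Cat A \<in> hom Cat A A) \<and>
    (\<forall>A B f. f \<in> hom Cat A B \<longrightarrow> cmp Cat f (idm Cat A) = f \<and> cmp Cat (idm Cat B) f = f) \<and>
    (\<forall>A B C D f g h. f \<in> hom Cat A B \<longrightarrow> g \<in> hom Cat B C \<longrightarrow> h \<in> hom Cat C D \<longrightarrow>
        cmp Cat h (cmp Cat g f) = cmp Cat (cmp Cat h g) f) \<and>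
    (\<forall>A B. zro Cat A B \<in> hom Cat A B) \<and>
    (\<forall>A B f g. f \<in> hom Cat A B \<longrightarrow> g \<in> hom Cat A B \<longrightarrow> pls Cat f g \<in> hom Cat A B) \<and>
    (\<forall>A B f. f \<in> hom Cat A B \<longrightarrow> ngt Cat f \<in> hom Cat A B) \<and>
    (\<forall>A B f g h. f \<in> hom Cat A B \<longrightarrow> g \<in> hom Cat A B \<longrightarrow> h \<in> hom Cat A B \<longrightarrow>
        pls Cat (pls Cat f g) h = pls Cat f (pls Cat g h)) \<and>
    (\<forall>A B f g. f \<in> hom Cat A B \<longrightarrow> g \<in> hom Cat A B \<longrightarrow> pls Cat f g = pls Cat g f) \<and>
    (\<forall>A B f. f \<in> hom Cat A B \<longrightarrow> pls Cat (zro Cat A B) f = f) \<and>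
    (\<forall>A B f. f \<in> hom Cat A B \<longrightarrow> pls Cat f (ngt Cat f) = zro Cat A B) \<and>
    (\<forall>A B C f g g'. f \<in> hom Cat A B \<longrightarrow> g \<in> hom Cat B C \<longrightarrow> g' \<in> hom Cat B C \<longrightarrow>
        cmp Cat (pls Cat g g') f = pls Cat (cmp Cat g f) (cmp Cat g' f)) \<and>
    (\<forall>A B C f f' h. f \<in> hom Cat A B \<longrightarrow> f' \<in> hom Cat A B \<longrightarrow> h \<in> hom Cat B C \<longrightarrow>
        cmp Cat h (pls Cat f f') = pls Cat (cmp Cat h f) (cmp Cat h f')) \<and>
    (\<forall>A B. inj1 Cat A B \<in> hom Cat A (dsum Cat A B) \<and> inj2 Cat A B \<in> hom Cat B (dsum Cat A B) \<and>
        prj1 Cat A B \<in> hom Cat (dsum Cat A B) A \<and> prj2 Cat A B \<in> hom Cat (dsum Cat A B) B \<and>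
        cmp Cat (prj1 Cat A B) (inj1 Cat A B) = idm Cat A \<and>
        cmp Cat (prj2 Cat A B) (inj2 Cat A B) = idm Cat B \<and>
        cmp Cat (prj1 Cat A B) (inj2 Cat A B) = zro Cat B A \<and>
        cmp Cat (prj2 Cat A B) (inj1 Cat A B) = zro Cat A B \<and>
        pls Cat (cmp Cat (inj1 Cat A B) (prj1 Cat A B)) (cmp Cat (inj2 Cat A B) (prj2 Cat A B))
          = idm Cat (dsum Cat A B))"

definition sub :: "('o, 'm) acat \<Rightarrow> 'm \<Rightarrow> 'm \<Rightarrow> 'm" where
  "sub Cat f g = pls Cat f (ngt Cat g)"

definition complete_compat :: "('o, 'm) acat \<Rightarrow> 'o \<Rightarrow> 'o \<Rightarrow> 'o \<Rightarrow> 'm \<Rightarrow> 'm \<Rightarrow> bool" where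
  "complete_compat Cat A B D K L \<longleftrightarrow>
    K \<in> hom Cat A B \<and> L \<in> hom Cat B D \<and> cmp Cat L K = zro Cat A D \<and>
    (\<forall>E L'. L' \<in> hom Cat B E \<and> cmp Cat L' K = zro Cat A E \<longrightarrow>
        (\<exists>L''. L'' \<in> hom Cat D E \<and> L' = cmp Cat L'' L))"

definition full_compat_complex :: "('o, 'm) acat \<Rightarrow> (nat \<Rightarrow> 'o) \<Rightarrow> (nat \<Rightarrow> 'm) \<Rightarrow> bool" where
  "full_compat_complex Cat V K \<longleftrightarrow>
    (\<forall>l. K l \<in> hom Cat (V l) (V (Suc l))) \<and>
    (\<forall>l. complete_compat Cat (V l) (V (Suc l)) (V (Suc (Suc l))) (K l) (K (Suc l)))"

definition equiv_htpy :: "('o, 'm) acat \<Rightarrow> (nat \<Rightarrow> 'o) \<Rightarrow> (nat \<Rightarrow> 'm) \<Rightarrow> (nat \<Rightarrow> 'o) \<Rightarrow> (nat \<Rightarrow> 'm)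
    \<Rightarrow> (nat \<Rightarrow> 'm) \<Rightarrow> (nat \<Rightarrow> 'm) \<Rightarrow> (nat \<Rightarrow> 'm) \<Rightarrow> (nat \<Rightarrow> 'm) \<Rightarrow> bool" where
  "equiv_htpy Cat V K V' K' C D H H' \<longleftrightarrow>
    (\<forall>l. C l \<in> hom Cat (V l) (V' l) \<and> D l \<in> hom Cat (V' l) (V l) \<and>
         H l \<in> hom Cat (V (Suc l)) (V l) \<and> H' l \<in> hom Cat (V' (Suc l)) (V' l) \<and>
         cmp Cat (K' l) (C l) = cmp Cat (C (Suc l)) (K l) \<and>
         cmp Cat (K l) (D l) = cmp Cat (D (Suc l)) (K' l) \<and>
         cmp Cat (D l) (C l) =
           sub Cat (sub Cat (idm Cat (V l))
                      (if l = 0 then zro Cat (V l) (V l) else cmp Cat (K (l - 1)) (H (l - 1))))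
                   (cmp Cat (H l) (K l)) \<and>
         cmp Cat (C l) (D l) =
           sub Cat (sub Cat (idm Cat (V' l))
                      (if l = 0 then zro Cat (V' l) (V' l) else cmp Cat (K' (l - 1)) (H' (l - 1))))
                   (cmp Cat (H' l) (K' l)))"

text \<open>The constructions of the lemma. The bottom bundles are V' l with V' 0 = V_0.\<close>

definition topV :: "('o, 'm) acat \<Rightarrow> 'o \<Rightarrow> (nat \<Rightarrow> 'o) \<Rightarrow> nat \<Rightarrow> 'o" where
  "topV Cat V1 V' l =
    (if l = 0 then V' 0 else if l = 1 then V1
     else if l = 2 then dsum Cat V1 (V' 2)
     else if l = 3 then dsum Cat (V' 1) (V' 3) else V' l)"

definition topK :: "('o, 'm) acat \<Rightarrow> 'o \<Rightarrow> (nat \<Rightarrow> 'o) \<Rightarrow> (nat \<Rightarrow> 'm) \<Rightarrow> 'm \<Rightarrow> 'm \<Rightarrow> 'm \<Rightarrow> 'm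
    \<Rightarrow> nat \<Rightarrow> 'm" where
  "topK Cat V1 V' K' K0 C1 D1 H'1 l =
    (if l = 0 then K0
     else if l = 1 then
       pls Cat (cmp Cat (inj1 Cat V1 (V' 2)) (sub Cat (idm Cat V1) (cmp Cat D1 C1)))
               (cmp Cat (inj2 Cat V1 (V' 2)) (cmp Cat (K' 1) C1))
     else if l = 2 then
       pls Cat (cmp Cat (inj1 Cat (V' 1) (V' 3))
                  (sub Cat (cmp Cat C1 (prj1 Cat V1 (V' 2))) (cmp Cat H'1 (prj2 Cat V1 (V' 2)))))
               (cmp Cat (inj2 Cat (V' 1) (V' 3)) (cmp Cat (K' 2) (prj2 Cat V1 (V' 2))))
     else if l = 3 then cmp Cat (K' 3) (prj2 Cat (V' 1) (V' 3))
     else K' l)"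

definition Cmaps :: "('o, 'm) acat \<Rightarrow> 'o \<Rightarrow> (nat \<Rightarrow> 'o) \<Rightarrow> 'm \<Rightarrow> nat \<Rightarrow> 'm" where
  "Cmaps Cat V1 V' C1 l =
    (if l = 0 then idm Cat (V' 0) else if l = 1 then C1
     else if l = 2 then prj2 Cat V1 (V' 2)
     else if l = 3 then prj2 Cat (V' 1) (V' 3) else idm Cat (V' l))"

definition Dmaps :: "('o, 'm) acat \<Rightarrow> 'o \<Rightarrow> (nat \<Rightarrow> 'o) \<Rightarrow> (nat \<Rightarrow> 'm) \<Rightarrow> 'm \<Rightarrow> 'm \<Rightarrow> nat \<Rightarrow> 'm" where
  "Dmaps Cat V1 V' K' D1 H'1 l =
    (if l = 0 then idm Cat (V' 0) else if l = 1 then D1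
     else if l = 2 then
       pls Cat (cmp Cat (inj1 Cat V1 (V' 2)) (cmp Cat D1 H'1))
               (cmp Cat (inj2 Cat V1 (V' 2)) (sub Cat (idm Cat (V' 2)) (cmp Cat (K' 1) H'1)))
     else if l = 3 then inj2 Cat (V' 1) (V' 3) else idm Cat (V' l))"

definition Hmaps :: "('o, 'm) acat \<Rightarrow> 'o \<Rightarrow> (nat \<Rightarrow> 'o) \<Rightarrow> (nat \<Rightarrow> 'm) \<Rightarrow> 'm \<Rightarrow> nat \<Rightarrow> 'm" where
  "Hmaps Cat V1 V' K' D1 l =
    (if l = 1 then prj1 Cat V1 (V' 2)
     else if l = 2 then
       pls Cat (cmp Cat (inj1 Cat V1 (V' 2)) (cmp Cat D1 (prj1 Cat (V' 1) (V' 3))))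
               (cmp Cat (inj2 Cat V1 (V' 2)) (ngt Cat (cmp Cat (K' 1) (prj1 Cat (V' 1) (V' 3)))))
     else zro Cat (topV Cat V1 V' (Suc l)) (topV Cat V1 V' l))"

definition H'maps :: "('o, 'm) acat \<Rightarrow> (nat \<Rightarrow> 'o) \<Rightarrow> 'm \<Rightarrow> nat \<Rightarrow> 'm" where
  "H'maps Cat V' H'1 l = (if l = 1 then H'1 else zro Cat (V' (Suc l)) (V' l))"

end

theory Submission
  imports Defs
begin

locale ac = fixes Cat :: "('o,'m) acat" assumes cat: "additive_cat Cat"
begin
definition c where "c (A::'o) (B::'o) (C::'o) g f = cmp Cat g f"
definition p where "p (A::'o) (B::'o) f g = pls Cat f g"
definition n where "n (A::'o) (B::'o) f = ngt Cat f"

lemmas ax = cat[unfolded additive_cat_def]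

lemma raw_cmp_hom: "f \<in> hom Cat A B \<Longrightarrow> g \<in> hom Cat B C \<Longrightarrow> cmp Cat g f \<in> hom Cat A C"
  using ax by metis
lemma raw_assoc: "f \<in> hom Cat A B \<Longrightarrow> g \<in> hom Cat B C \<Longrightarrow> h \<in> hom Cat C D \<Longrightarrow>
   cmp Cat (cmp Cat h g) f = cmp Cat h (cmp Cat g f)"
  using ax by metis

lemma c_hom[simp]: "f \<in> hom Cat A B \<Longrightarrow> g \<in> hom Cat B C \<Longrightarrow> c A B C g f \<in> hom Cat A C"
  unfolding c_def using ax by metis
lemma p_hom[simp]: "f \<in> hom Cat A B \<Longrightarrow> g \<in> hom Cat A B \<Longrightarrow> p A B f g \<in> hom Cat A B"
  unfolding p_def using ax by metis
lemma n_hom[simp]: "f \<in> hom Cat A B \<Longrightarrow> n A B f \<in> hom Cat A B"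
  unfolding n_def using ax by metis
lemma z_hom[simp]: "zro Cat A B \<in> hom Cat A B" using ax by metis
lemma id_hom[simp]: "idm Cat A \<in> hom Cat A A" using ax by metis
lemma bp_hom[simp]: "inj1 Cat A B \<in> hom Cat A (dsum Cat A B)" "inj2 Cat A B \<in> hom Cat B (dsum Cat A B)"
  "prj1 Cat A B \<in> hom Cat (dsum Cat A B) A" "prj2 Cat A B \<in> hom Cat (dsum Cat A B) B"
  using ax by metis+

lemma c_assoc[simp]: "f \<in> hom Cat A B \<Longrightarrow> g \<in> hom Cat B C \<Longrightarrow> h \<in> hom Cat C D \<Longrightarrow>
   c A B D (c B C D h g) f = c A C D h (c A B C g f)"
  unfolding c_def using ax by metis
lemma c_id[simp]: "f \<in> hom Cat A B \<Longrightarrow> c A B B (idm Cat B) f = f"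
   "f \<in> hom Cat A B \<Longrightarrow> c A A B f (idm Cat A) = f"
  unfolding c_def using ax by metis+
lemma p_assoc[simp]: "f \<in> hom Cat A B \<Longrightarrow> g \<in> hom Cat A B \<Longrightarrow> h \<in> hom Cat A B \<Longrightarrow>
   p A B (p A B f g) h = p A B f (p A B g h)"
  unfolding p_def using ax by metis
lemma p_comm: "f \<in> hom Cat A B \<Longrightarrow> g \<in> hom Cat A B \<Longrightarrow> p A B f g = p A B g f"
  unfolding p_def using ax by metis
lemma p_lcomm: "f \<in> hom Cat A B \<Longrightarrow> g \<in> hom Cat A B \<Longrightarrow> h \<in> hom Cat A B \<Longrightarrow>
   p A B f (p A B g h) = p A B g (p A B f h)"
  by (metis p_assoc p_comm)
lemmas p_ac = p_comm p_lcomm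
lemma p_z[simp]: "f \<in> hom Cat A B \<Longrightarrow> p A B (zro Cat A B) f = f"
  "f \<in> hom Cat A B \<Longrightarrow> p A B f (zro Cat A B) = f"
  unfolding p_def using ax by metis+
lemma p_n[simp]: "f \<in> hom Cat A B \<Longrightarrow> p A B f (n A B f) = zro Cat A B"
  "f \<in> hom Cat A B \<Longrightarrow> p A B (n A B f) f = zro Cat A B"
  unfolding p_def n_def using ax by metis+
lemma p_n2[simp]: "f \<in> hom Cat A B \<Longrightarrow> g \<in> hom Cat A B \<Longrightarrow> p A B f (p A B (n A B f) g) = g"
  "f \<in> hom Cat A B \<Longrightarrow> g \<in> hom Cat A B \<Longrightarrow> p A B (n A B f) (p A B f g) = g"
  by (simp_all flip: p_assoc)
lemma c_distL[simp]: "f \<in> hom Cat A B \<Longrightarrow> g \<in> hom Cat B C \<Longrightarrow> g' \<in> hom Cat B C \<Longrightarrow>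
  c A B C (p B C g g') f = p A C (c A B C g f) (c A B C g' f)"
  unfolding p_def c_def using ax by metis
lemma c_distR[simp]: "f \<in> hom Cat A B \<Longrightarrow> f' \<in> hom Cat A B \<Longrightarrow> h \<in> hom Cat B C \<Longrightarrow>
  c A B C h (p A B f f') = p A C (c A B C h f) (c A B C h f')"
  unfolding p_def c_def using ax by metis
lemma n_unique: "f \<in> hom Cat A B \<Longrightarrow> g \<in> hom Cat A B \<Longrightarrow> p A B f g = zro Cat A B \<Longrightarrow> g = n A B f"
proof -
  assume f: "f \<in> hom Cat A B" and g: "g \<in> hom Cat A B" and s: "p A B f g = zro Cat A B"
  have "g = p A B (p A B (n A B f) f) g" using f g by simp
  also have "\<dots> = p A B (n A B f) (p A B f g)" using f g by (simp only: p_assoc n_hom)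
  also have "\<dots> = n A B f" using s f by simp
  finally show ?thesis .
qed
lemma zz[simp]: "p A B (zro Cat A B) (zro Cat A B) = zro Cat A B" by simp
lemma n_z[simp]: "n A B (zro Cat A B) = zro Cat A B"
  by (metis n_unique z_hom zz)
lemma n_n[simp]: "f \<in> hom Cat A B \<Longrightarrow> n A B (n A B f) = f"
  by (metis n_hom n_unique p_n(2))
lemma n_p[simp]: "f \<in> hom Cat A B \<Longrightarrow> g \<in> hom Cat A B \<Longrightarrow> n A B (p A B f g) = p A B (n A B f) (n A B g)"
proof -
  assume f: "f \<in> hom Cat A B" and g: "g \<in> hom Cat A B"
  have "p A B (p A B f g) (p A B (n A B f) (n A B g)) = zro Cat A B"
    using f g by (simp add: p_ac)
  thus ?thesis using f g by (metis n_hom n_unique p_hom)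
qed
lemma c_zL[simp]: "f \<in> hom Cat A B \<Longrightarrow> c A B C (zro Cat B C) f = zro Cat A C"
proof -
  assume f: "f \<in> hom Cat A B"
  have "c A B C (zro Cat B C) f = p A C (c A B C (zro Cat B C) f) (c A B C (zro Cat B C) f)"
    using f by (metis c_distL z_hom zz)
  hence "p A C (c A B C (zro Cat B C) f) (n A C (c A B C (zro Cat B C) f)) =
     p A C (c A B C (zro Cat B C) f) (p A C (c A B C (zro Cat B C) f) (n A C (c A B C (zro Cat B C) f)))"
    using f by (metis c_hom n_hom p_assoc z_hom)
  thus ?thesis using f by simp
qed
lemma c_zR[simp]: "h \<in> hom Cat B C \<Longrightarrow> c A B C h (zro Cat A B) = zro Cat A C"
proof -
  assume f: "h \<in> hom Cat B C"
  have "c A B C h (zro Cat A B) = p A C (c A B C h (zro Cat A B)) (c A B C h (zro Cat A B))"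
    using f by (metis c_distR z_hom zz)
  hence "p A C (c A B C h (zro Cat A B)) (n A C (c A B C h (zro Cat A B))) =
     p A C (c A B C h (zro Cat A B)) (p A C (c A B C h (zro Cat A B)) (n A C (c A B C h (zro Cat A B))))"
    using f by (metis c_hom n_hom p_assoc z_hom)
  thus ?thesis using f by simp
qed
lemma c_nL[simp]: "f \<in> hom Cat A B \<Longrightarrow> g \<in> hom Cat B C \<Longrightarrow> c A B C (n B C g) f = n A C (c A B C g f)"
proof -
  assume f: "f \<in> hom Cat A B" and g: "g \<in> hom Cat B C"
  have "p A C (c A B C g f) (c A B C (n B C g) f) = zro Cat A C"
    using f g by (simp flip: c_distL)
  thus ?thesis using f g by (metis c_hom n_hom n_unique)
qed
lemma c_nR[simp]: "f \<in> hom Cat A B \<Longrightarrow> g \<in> hom Cat B C \<Longrightarrow> c A B C g (n A B f) = n A C (c A B C g f)"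
proof -
  assume f: "f \<in> hom Cat A B" and g: "g \<in> hom Cat B C"
  have "p A C (c A B C g f) (c A B C g (n A B f)) = zro Cat A C"
    using f g by (simp flip: c_distR)
  thus ?thesis using f g by (metis c_hom n_hom n_unique)
qed

lemma bp[simp]:
  "c A (dsum Cat A B) A (prj1 Cat A B) (inj1 Cat A B) = idm Cat A"
  "c B (dsum Cat A B) B (prj2 Cat A B) (inj2 Cat A B) = idm Cat B"
  "c B (dsum Cat A B) A (prj1 Cat A B) (inj2 Cat A B) = zro Cat B A"
  "c A (dsum Cat A B) B (prj2 Cat A B) (inj1 Cat A B) = zro Cat A B"
  unfolding c_def using ax by metis+
lemma bp2[simp]:
  "f \<in> hom Cat X A \<Longrightarrow> c X (dsum Cat A B) A (prj1 Cat A B) (c X A (dsum Cat A B) (inj1 Cat A B) f) = f"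
  "g \<in> hom Cat X B \<Longrightarrow> c X (dsum Cat A B) B (prj2 Cat A B) (c X B (dsum Cat A B) (inj2 Cat A B) g) = g"
  "g \<in> hom Cat X B \<Longrightarrow> c X (dsum Cat A B) A (prj1 Cat A B) (c X B (dsum Cat A B) (inj2 Cat A B) g) = zro Cat X A"
  "f \<in> hom Cat X A \<Longrightarrow> c X (dsum Cat A B) B (prj2 Cat A B) (c X A (dsum Cat A B) (inj1 Cat A B) f) = zro Cat X B"
  by (simp_all flip: c_assoc)
lemma bp_sum: "p (dsum Cat A B) (dsum Cat A B) (c (dsum Cat A B) A (dsum Cat A B) (inj1 Cat A B) (prj1 Cat A B))
   (c (dsum Cat A B) B (dsum Cat A B) (inj2 Cat A B) (prj2 Cat A B)) = idm Cat (dsum Cat A B)"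
  unfolding c_def p_def using ax by metis
lemma ext_out:
  assumes f: "f \<in> hom Cat X (dsum Cat A B)" and g: "g \<in> hom Cat X (dsum Cat A B)"
   and 1: "c X (dsum Cat A B) A (prj1 Cat A B) f = c X (dsum Cat A B) A (prj1 Cat A B) g"
   and 2: "c X (dsum Cat A B) B (prj2 Cat A B) f = c X (dsum Cat A B) B (prj2 Cat A B) g"
  shows "f = g"
proof -
  have "f = c X (dsum Cat A B) (dsum Cat A B) (idm Cat (dsum Cat A B)) f" using f by simp
  also have "\<dots> = p X (dsum Cat A B) (c X A (dsum Cat A B) (inj1 Cat A B) (c X (dsum Cat A B) A (prj1 Cat A B) f))
     (c X B (dsum Cat A B) (inj2 Cat A B) (c X (dsum Cat A B) B (prj2 Cat A B) f))"
    using f by (simp flip: bp_sum)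
  also have "\<dots> = p X (dsum Cat A B) (c X A (dsum Cat A B) (inj1 Cat A B) (c X (dsum Cat A B) A (prj1 Cat A B) g))
     (c X B (dsum Cat A B) (inj2 Cat A B) (c X (dsum Cat A B) B (prj2 Cat A B) g))" using 1 2 by simp
  also have "\<dots> = c X (dsum Cat A B) (dsum Cat A B) (idm Cat (dsum Cat A B)) g"
    using g by (simp flip: bp_sum)
  finally show ?thesis using g by simp
qed
lemma ext_in:
  assumes f: "f \<in> hom Cat (dsum Cat A B) Y" and g: "g \<in> hom Cat (dsum Cat A B) Y"
   and 1: "c A (dsum Cat A B) Y f (inj1 Cat A B) = c A (dsum Cat A B) Y g (inj1 Cat A B)"
   and 2: "c B (dsum Cat A B) Y f (inj2 Cat A B) = c B (dsum Cat A B) Y g (inj2 Cat A B)"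
  shows "f = g"
proof -
  have "f = c (dsum Cat A B) (dsum Cat A B) Y f (idm Cat (dsum Cat A B))" using f by simp
  also have "\<dots> = p (dsum Cat A B) Y (c (dsum Cat A B) A Y (c A (dsum Cat A B) Y f (inj1 Cat A B)) (prj1 Cat A B))
     (c (dsum Cat A B) B Y (c B (dsum Cat A B) Y f (inj2 Cat A B)) (prj2 Cat A B))"
    using f by (simp del: c_assoc add: c_assoc[symmetric] flip: bp_sum)
  also have "\<dots> = p (dsum Cat A B) Y (c (dsum Cat A B) A Y (c A (dsum Cat A B) Y g (inj1 Cat A B)) (prj1 Cat A B))
     (c (dsum Cat A B) B Y (c B (dsum Cat A B) Y g (inj2 Cat A B)) (prj2 Cat A B))" using 1 2 by simp
  also have "\<dots> = c (dsum Cat A B) (dsum Cat A B) Y g (idm Cat (dsum Cat A B))"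
    using g by (simp del: c_assoc add: c_assoc[symmetric] flip: bp_sum)
  finally show ?thesis using g by simp
qed
lemma cont: "c A B C g f = r \<Longrightarrow> f \<in> hom Cat A B \<Longrightarrow> g \<in> hom Cat B C \<Longrightarrow> Y \<in> hom Cat X A \<Longrightarrow>
   c X B C g (c X A B f Y) = c X A C r Y"
  by (simp flip: c_assoc)

lemma transfer:
  assumes Kl: "Kl \<in> hom Cat Vl Vl1" and Kl1: "Kl1 \<in> hom Cat Vl1 Vl2"
   and Dl: "Dl \<in> hom Cat Wl Vl" and Dx: "Dx \<in> hom Cat Wl1 Vl1" and Cx: "Cx \<in> hom Cat Vl1 Wl1"
   and Cy: "Cy \<in> hom Cat Vl2 Wl2" and Hy: "Hy \<in> hom Cat Vl2 Vl1" and Hx: "Hx \<in> hom Cat Vl1 Vl"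
   and KD: "cmp Cat Kl Dl = cmp Cat Dx Kb"
   and CK: "cmp Cat Kbb Cx = cmp Cat Cy Kl1"
   and DC: "cmp Cat Dx Cx = sub Cat (sub Cat (idm Cat Vl1) (cmp Cat Kl Hx)) (cmp Cat Hy Kl1)"
   and bot: "complete_compat Cat Wl Wl1 Wl2 Kb Kbb"
   and zero: "cmp Cat Kl1 Kl = zro Cat Vl Vl2"
  shows "complete_compat Cat Vl Vl1 Vl2 Kl Kl1"
  unfolding complete_compat_def
proof (intro conjI allI impI Kl Kl1 zero, elim conjE)
  have Kb: "Kb \<in> hom Cat Wl Wl1" and Kbb: "Kbb \<in> hom Cat Wl1 Wl2"
    using bot unfolding complete_compat_def by auto
  fix E L' assume L': "L' \<in> hom Cat Vl1 E" and LK: "cmp Cat L' Kl = zro Cat Vl E"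
  have KD': "c Wl Vl Vl1 Kl Dl = c Wl Wl1 Vl1 Dx Kb" using KD by (simp add: c_def)
  have LK': "c Vl Vl1 E L' Kl = zro Cat Vl E" using LK by (simp add: c_def)
  have "c Wl Wl1 E (c Wl1 Vl1 E L' Dx) Kb = zro Cat Wl E"
  proof -
    have "c Wl Wl1 E (c Wl1 Vl1 E L' Dx) Kb = c Wl Vl1 E L' (c Wl Wl1 Vl1 Dx Kb)"
      using L' Dx Kb by simp
    also have "\<dots> = c Wl Vl1 E L' (c Wl Vl Vl1 Kl Dl)" using KD' by simp
    also have "\<dots> = c Wl Vl E (c Vl Vl1 E L' Kl) Dl" using L' Kl Dl by simp
    finally show ?thesis using LK' Dl by simp
  qed
  hence "cmp Cat (cmp Cat L' Dx) Kb = zro Cat Wl E" by (simp add: c_def)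
  moreover have "cmp Cat L' Dx \<in> hom Cat Wl1 E" using L' Dx raw_cmp_hom by blast
  ultimately obtain M where M: "M \<in> hom Cat Wl2 E" and LD: "cmp Cat L' Dx = cmp Cat M Kbb"
    using bot unfolding complete_compat_def by blast
  define L'' where "L'' = p Vl2 E (c Vl2 Wl2 E M Cy) (c Vl2 Vl1 E L' Hy)"
  have L''h: "L'' \<in> hom Cat Vl2 E" unfolding L''_def using M Cy L' Hy by simp
  have LD': "c Wl1 Vl1 E L' Dx = c Wl1 Wl2 E M Kbb" using LD by (simp add: c_def)
  have CK': "c Vl1 Wl1 Wl2 Kbb Cx = c Vl1 Vl2 Wl2 Cy Kl1" using CK by (simp add: c_def)
  have DC': "c Vl1 Wl1 Vl1 Dx Cx = p Vl1 Vl1 (p Vl1 Vl1 (idm Cat Vl1) (n Vl1 Vl1 (c Vl1 Vl Vl1 Kl Hx)))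
      (n Vl1 Vl1 (c Vl1 Vl2 Vl1 Hy Kl1))" using DC by (simp add: c_def p_def n_def sub_def)
  have "c Vl1 Vl2 E L'' Kl1 = L'"
  proof -
    have "c Vl1 Vl2 E L'' Kl1 = p Vl1 E (c Vl1 Wl2 E M (c Vl1 Vl2 Wl2 Cy Kl1)) (c Vl1 Vl1 E L' (c Vl1 Vl2 Vl1 Hy Kl1))"
      unfolding L''_def using M Cy L' Hy Kl1 by simp
    also have "c Vl1 Wl2 E M (c Vl1 Vl2 Wl2 Cy Kl1) = c Vl1 Wl1 E (c Wl1 Wl2 E M Kbb) Cx"
      using CK'[symmetric] M Kbb Cx by simp
    also have "\<dots> = c Vl1 Wl1 E (c Wl1 Vl1 E L' Dx) Cx" using LD' by simp
    also have "\<dots> = c Vl1 Vl1 E L' (c Vl1 Wl1 Vl1 Dx Cx)" using L' Dx Cx by simp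
    also have "\<dots> = p Vl1 E (p Vl1 E L' (n Vl1 E (c Vl1 Vl E (c Vl Vl1 E L' Kl) Hx))) (n Vl1 E (c Vl1 Vl1 E L' (c Vl1 Vl2 Vl1 Hy Kl1)))"
      unfolding DC' using L' Kl Hx Hy Kl1 by (simp del: c_assoc add: c_assoc[symmetric])
    also have "\<dots> = p Vl1 E L' (n Vl1 E (c Vl1 Vl1 E L' (c Vl1 Vl2 Vl1 Hy Kl1)))"
      using LK' L' Hx by simp
    finally show ?thesis using L' Hy Kl1 by simp
  qed
  thus "\<exists>L''. L'' \<in> hom Cat Vl2 E \<and> L' = cmp Cat L'' Kl1" using L''h by (auto simp: c_def)
qed

lemma ext_both:
  assumes f: "f \<in> hom Cat (dsum Cat A B) (dsum Cat C D)" and g: "g \<in> hom Cat (dsum Cat A B) (dsum Cat C D)"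
   and 1: "c A (dsum Cat C D) C (prj1 Cat C D) (c A (dsum Cat A B) (dsum Cat C D) f (inj1 Cat A B)) = c A (dsum Cat C D) C (prj1 Cat C D) (c A (dsum Cat A B) (dsum Cat C D) g (inj1 Cat A B))"
   and 2: "c A (dsum Cat C D) D (prj2 Cat C D) (c A (dsum Cat A B) (dsum Cat C D) f (inj1 Cat A B)) = c A (dsum Cat C D) D (prj2 Cat C D) (c A (dsum Cat A B) (dsum Cat C D) g (inj1 Cat A B))"
   and 3: "c B (dsum Cat C D) C (prj1 Cat C D) (c B (dsum Cat A B) (dsum Cat C D) f (inj2 Cat A B)) = c B (dsum Cat C D) C (prj1 Cat C D) (c B (dsum Cat A B) (dsum Cat C D) g (inj2 Cat A B))"
   and 4: "c B (dsum Cat C D) D (prj2 Cat C D) (c B (dsum Cat A B) (dsum Cat C D) f (inj2 Cat A B)) = c B (dsum Cat C D) D (prj2 Cat C D) (c B (dsum Cat A B) (dsum Cat C D) g (inj2 Cat A B))"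
  shows "f = g"
proof (rule ext_in[OF f g])
  show "c A (dsum Cat A B) (dsum Cat C D) f (inj1 Cat A B) = c A (dsum Cat A B) (dsum Cat C D) g (inj1 Cat A B)"
    by (rule ext_out[OF _ _ 1 2]) (use f g in simp_all)
  show "c B (dsum Cat A B) (dsum Cat C D) f (inj2 Cat A B) = c B (dsum Cat A B) (dsum Cat C D) g (inj2 Cat A B)"
    by (rule ext_out[OF _ _ 3 4]) (use f g in simp_all)
qed
end

locale setup5 = ac +
  fixes V1 V' K' K0 C1 D1 H'1
  assumes bottom: "full_compat_complex Cat V' K'"
    and K0[simp]: "K0 \<in> hom Cat (V' 0) V1"
    and C1[simp]: "C1 \<in> hom Cat V1 (V' 1)"
    and D1[simp]: "D1 \<in> hom Cat (V' 1) V1"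
    and H'1[simp]: "H'1 \<in> hom Cat (V' 2) (V' 1)"
    and CK: "cmp Cat C1 K0 = K' 0"
    and DK: "cmp Cat D1 (K' 0) = K0"
    and htpy: "sub Cat (idm Cat (V' 1)) (cmp Cat C1 D1) = cmp Cat H'1 (K' 1)"
begin
abbreviation "W2 \<equiv> dsum Cat V1 (V' 2)"
abbreviation "W3 \<equiv> dsum Cat (V' 1) (V' 3)"
lemma Kh: "K' l \<in> hom Cat (V' l) (V' (Suc l))" using bottom unfolding full_compat_complex_def by auto
lemma Kz: "cmp Cat (K' (Suc l)) (K' l) = zro Cat (V' l) (V' (Suc (Suc l)))"
  using bottom unfolding full_compat_complex_def complete_compat_def by auto
lemma Kh'[simp]: "K' 0 \<in> hom Cat (V' 0) (V' 1)" "K' 1 \<in> hom Cat (V' 1) (V' 2)"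
  "K' 2 \<in> hom Cat (V' 2) (V' 3)" "K' 3 \<in> hom Cat (V' 3) (V' 4)" "K' 4 \<in> hom Cat (V' 4) (V' 5)"
  using Kh[of 0] Kh[of 1] Kh[of 2] Kh[of 3] Kh[of 4] by (simp_all add: eval_nat_numeral)
lemma Kz': "c (V' 0) (V' 1) (V' 2) (K' 1) (K' 0) = zro Cat (V' 0) (V' 2)"
  "c (V' 1) (V' 2) (V' 3) (K' 2) (K' 1) = zro Cat (V' 1) (V' 3)"
  "c (V' 2) (V' 3) (V' 4) (K' 3) (K' 2) = zro Cat (V' 2) (V' 4)"
  "c (V' 3) (V' 4) (V' 5) (K' 4) (K' 3) = zro Cat (V' 3) (V' 5)"
  using Kz[of 0] Kz[of 1] Kz[of 2] Kz[of 3] by (simp_all add: c_def eval_nat_numeral)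
declare One_nat_def[simp del]
lemma CK': "c (V' 0) V1 (V' 1) C1 K0 = K' 0" using CK by (simp add: c_def)
lemma DK': "c (V' 0) (V' 1) V1 D1 (K' 0) = K0" using DK by (simp add: c_def)
lemma htpy': "c (V' 1) (V' 2) (V' 1) H'1 (K' 1) = p (V' 1) (V' 1) (idm Cat (V' 1)) (n (V' 1) (V' 1) (c (V' 1) V1 (V' 1) C1 D1))"
  using htpy by (simp add: c_def p_def n_def sub_def)
lemmas eqs[simp] = Kz' CK' DK' htpy'
lemmas eqsc[simp] = cont[OF Kz'(1)] cont[OF Kz'(2)] cont[OF Kz'(3)] cont[OF Kz'(4)]
  cont[OF CK'] cont[OF DK'] cont[OF htpy']

definition "K1t = p V1 W2 (c V1 V1 W2 (inj1 Cat V1 (V' 2)) (p V1 V1 (idm Cat V1) (n V1 V1 (c V1 (V' 1) V1 D1 C1))))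
   (c V1 (V' 2) W2 (inj2 Cat V1 (V' 2)) (c V1 (V' 1) (V' 2) (K' 1) C1))"
definition "K2t = p W2 W3 (c W2 (V' 1) W3 (inj1 Cat (V' 1) (V' 3))
     (p W2 (V' 1) (c W2 V1 (V' 1) C1 (prj1 Cat V1 (V' 2))) (n W2 (V' 1) (c W2 (V' 2) (V' 1) H'1 (prj2 Cat V1 (V' 2))))))
   (c W2 (V' 3) W3 (inj2 Cat (V' 1) (V' 3)) (c W2 (V' 2) (V' 3) (K' 2) (prj2 Cat V1 (V' 2))))"
definition "K3t = c W3 (V' 3) (V' 4) (K' 3) (prj2 Cat (V' 1) (V' 3))"
definition "D2t = p (V' 2) W2 (c (V' 2) V1 W2 (inj1 Cat V1 (V' 2)) (c (V' 2) (V' 1) V1 D1 H'1))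
   (c (V' 2) (V' 2) W2 (inj2 Cat V1 (V' 2)) (p (V' 2) (V' 2) (idm Cat (V' 2)) (n (V' 2) (V' 2) (c (V' 2) (V' 1) (V' 2) (K' 1) H'1))))"
definition "H2t = p W3 W2 (c W3 V1 W2 (inj1 Cat V1 (V' 2)) (c W3 (V' 1) V1 D1 (prj1 Cat (V' 1) (V' 3))))
   (c W3 (V' 2) W2 (inj2 Cat V1 (V' 2)) (n W3 (V' 2) (c W3 (V' 1) (V' 2) (K' 1) (prj1 Cat (V' 1) (V' 3)))))"

lemma Z0: "c (V' 0) V1 W2 K1t K0 = zro Cat (V' 0) W2"
  by (rule ext_out[where X="V' 0" and A=V1 and B="V' 2"]) (simp_all add: K1t_def)
lemma Z1: "c V1 W2 W3 K2t K1t = zro Cat V1 W3"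
  by (rule ext_out[where X=V1 and A="V' 1" and B="V' 3"]) (simp_all add: K1t_def K2t_def p_ac)
lemma Z2: "c W2 W3 (V' 4) K3t K2t = zro Cat W2 (V' 4)"
  by (simp add: K3t_def K2t_def)
lemma Z3: "c W3 (V' 4) (V' 5) (K' 4) K3t = zro Cat W3 (V' 5)"
  by (simp add: K3t_def)

lemmas defs = K1t_def K2t_def K3t_def D2t_def H2t_def
lemma C0: "c (V' 0) (V' 0) (V' 1) (K' 0) (idm Cat (V' 0)) = c (V' 0) V1 (V' 1) C1 K0" by simp
lemma C1eq: "c V1 (V' 1) (V' 2) (K' 1) C1 = c V1 W2 (V' 2) (prj2 Cat V1 (V' 2)) K1t" by (simp add: defs)
lemma C2eq: "c W2 (V' 2) (V' 3) (K' 2) (prj2 Cat V1 (V' 2)) = c W2 W3 (V' 3) (prj2 Cat (V' 1) (V' 3)) K2t" by (simp add: defs)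
lemma C3eq: "c W3 (V' 3) (V' 4) (K' 3) (prj2 Cat (V' 1) (V' 3)) = c W3 (V' 4) (V' 4) (idm Cat (V' 4)) K3t" by (simp add: defs)
lemma D0: "c (V' 0) (V' 0) V1 K0 (idm Cat (V' 0)) = c (V' 0) (V' 1) V1 D1 (K' 0)" by simp
lemma D1eq: "c (V' 1) V1 W2 K1t D1 = c (V' 1) (V' 2) W2 D2t (K' 1)"
  by (rule ext_out[where X="V' 1" and A=V1 and B="V' 2"]) (simp_all add: defs p_ac)
lemma D2eq: "c (V' 2) W2 W3 K2t D2t = c (V' 2) (V' 3) W3 (inj2 Cat (V' 1) (V' 3)) (K' 2)"
  by (rule ext_out[where X="V' 2" and A="V' 1" and B="V' 3"]) (simp_all add: defs p_ac)
lemma D3eq: "c (V' 3) W3 (V' 4) K3t (inj2 Cat (V' 1) (V' 3)) = c (V' 3) (V' 4) (V' 4) (idm Cat (V' 4)) (K' 3)"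
  by (simp add: defs)
lemma DC0: "c (V' 0) (V' 0) (V' 0) (idm Cat (V' 0)) (idm Cat (V' 0)) = p (V' 0) (V' 0) (p (V' 0) (V' 0) (idm Cat (V' 0)) (n (V' 0) (V' 0) (zro Cat (V' 0) (V' 0)))) (n (V' 0) (V' 0) (c (V' 0) V1 (V' 0) (zro Cat V1 (V' 0)) K0))"
  by simp
lemma DC1: "c V1 (V' 1) V1 D1 C1 = p V1 V1 (p V1 V1 (idm Cat V1) (n V1 V1 (c V1 (V' 0) V1 K0 (zro Cat V1 (V' 0))))) (n V1 V1 (c V1 W2 V1 (prj1 Cat V1 (V' 2)) K1t))"
  by (simp add: defs)
lemma DC2: "c W2 (V' 2) W2 D2t (prj2 Cat V1 (V' 2)) = p W2 W2 (p W2 W2 (idm Cat W2) (n W2 W2 (c W2 V1 W2 K1t (prj1 Cat V1 (V' 2))))) (n W2 W2 (c W2 W3 W2 H2t K2t))"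
  by (rule ext_both[where A=V1 and B="V' 2" and C=V1 and D="V' 2"]) (simp_all add: defs p_ac)
lemma DC3: "c W3 (V' 3) W3 (inj2 Cat (V' 1) (V' 3)) (prj2 Cat (V' 1) (V' 3)) = p W3 W3 (p W3 W3 (idm Cat W3) (n W3 W3 (c W3 W2 W3 K2t H2t))) (n W3 W3 (c W3 (V' 4) W3 (zro Cat (V' 4) W3) K3t))"
  by (rule ext_both[where A="V' 1" and B="V' 3" and C="V' 1" and D="V' 3"]) (simp_all add: defs p_ac)
lemma CD0: "c (V' 0) (V' 0) (V' 0) (idm Cat (V' 0)) (idm Cat (V' 0)) = p (V' 0) (V' 0) (p (V' 0) (V' 0) (idm Cat (V' 0)) (n (V' 0) (V' 0) (zro Cat (V' 0) (V' 0)))) (n (V' 0) (V' 0) (c (V' 0) (V' 1) (V' 0) (zro Cat (V' 1) (V' 0)) (K' 0)))"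
  by simp
lemma CD1: "c (V' 1) V1 (V' 1) C1 D1 = p (V' 1) (V' 1) (p (V' 1) (V' 1) (idm Cat (V' 1)) (n (V' 1) (V' 1) (c (V' 1) (V' 0) (V' 1) (K' 0) (zro Cat (V' 1) (V' 0))))) (n (V' 1) (V' 1) (c (V' 1) (V' 2) (V' 1) H'1 (K' 1)))"
  by simp
lemma CD2: "c (V' 2) W2 (V' 2) (prj2 Cat V1 (V' 2)) D2t = p (V' 2) (V' 2) (p (V' 2) (V' 2) (idm Cat (V' 2)) (n (V' 2) (V' 2) (c (V' 2) (V' 1) (V' 2) (K' 1) H'1))) (n (V' 2) (V' 2) (c (V' 2) (V' 3) (V' 2) (zro Cat (V' 3) (V' 2)) (K' 2)))"
  by (simp add: defs)
lemma CD3: "c (V' 3) W3 (V' 3) (prj2 Cat (V' 1) (V' 3)) (inj2 Cat (V' 1) (V' 3)) = p (V' 3) (V' 3) (p (V' 3) (V' 3) (idm Cat (V' 3)) (n (V' 3) (V' 3) (c (V' 3) (V' 2) (V' 3) (K' 2) (zro Cat (V' 3) (V' 2))))) (n (V' 3) (V' 3) (c (V' 3) (V' 4) (V' 3) (zro Cat (V' 4) (V' 3)) (K' 3)))"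
  by simp

lemma raw_zR: "h \<in> hom Cat B C \<Longrightarrow> cmp Cat h (zro Cat A B) = zro Cat A C"
  using c_zR by (simp add: c_def)
lemma raw_zL: "f \<in> hom Cat A B \<Longrightarrow> cmp Cat (zro Cat B C) f = zro Cat A C"
  using c_zL by (simp add: c_def)
lemma raw_id: "f \<in> hom Cat A B \<Longrightarrow> cmp Cat (idm Cat B) f = f" "f \<in> hom Cat A B \<Longrightarrow> cmp Cat f (idm Cat A) = f"
  using c_id by (simp_all add: c_def)
lemma raw_sz: "f \<in> hom Cat A B \<Longrightarrow> sub Cat f (zro Cat A B) = f"
  using p_z n_z by (simp add: sub_def p_def n_def)

abbreviation "tV \<equiv> topV Cat V1 V'"
abbreviation "tK \<equiv> topK Cat V1 V' K' K0 C1 D1 H'1"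
abbreviation "tC \<equiv> Cmaps Cat V1 V' C1"
abbreviation "tD \<equiv> Dmaps Cat V1 V' K' D1 H'1"
abbreviation "tH \<equiv> Hmaps Cat V1 V' K' D1"
abbreviation "tH' \<equiv> H'maps Cat V' H'1"

lemma tK0: "tK 0 = K0" by (simp add: topK_def)
lemma tK1: "tK 1 = K1t" by (simp add: topK_def defs c_def p_def n_def sub_def)
lemma tK2: "tK 2 = K2t" by (simp add: topK_def defs c_def p_def n_def sub_def)
lemma tK3: "tK 3 = K3t" by (simp add: topK_def defs c_def p_def n_def sub_def)
lemma tK4: "l \<ge> 4 \<Longrightarrow> tK l = K' l" by (simp add: topK_def)
lemma tD2: "tD 2 = D2t" by (simp add: Dmaps_def defs c_def p_def n_def sub_def)
lemma tH2: "tH 2 = H2t" by (simp add: Hmaps_def defs c_def p_def n_def sub_def)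
lemma th[simp]: "K1t \<in> hom Cat V1 W2" "K2t \<in> hom Cat W2 W3" "K3t \<in> hom Cat W3 (V' 4)"
  "D2t \<in> hom Cat (V' 2) W2" "H2t \<in> hom Cat W3 W2"
  by (simp_all add: defs)

lemma main_hom: "tK l \<in> hom Cat (tV l) (tV (Suc l))"
proof -
  consider "l = 0" | "l = 1" | "l = 2" | "l = 3" | "l \<ge> 4" by linarith
  thus ?thesis
  proof cases
    case 1 thus ?thesis by (simp add: tK0 topV_def One_nat_def[symmetric])
  next
    case 2 thus ?thesis by (simp add: tK1 topV_def)
  next
    case 3 thus ?thesis by (simp add: tK2 topV_def)
  next
    case 4 thus ?thesis by (simp add: tK3 topV_def)
  next
    case 5 thus ?thesis using Kh[of l] by (simp add: tK4 topV_def)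
  qed
qed


lemma evals:
  "tV 0 = V' 0" "tV 1 = V1" "tV 2 = W2" "tV 3 = W3" "tV 4 = V' 4"
  "tC 0 = idm Cat (V' 0)" "tC 1 = C1" "tC 2 = prj2 Cat V1 (V' 2)" "tC 3 = prj2 Cat (V' 1) (V' 3)" "tC 4 = idm Cat (V' 4)"
  "tD 0 = idm Cat (V' 0)" "tD 1 = D1" "tD 3 = inj2 Cat (V' 1) (V' 3)" "tD 4 = idm Cat (V' 4)"
  "tH 0 = zro Cat V1 (V' 0)" "tH 1 = prj1 Cat V1 (V' 2)" "tH 3 = zro Cat (V' 4) W3"
  "tH' 0 = zro Cat (V' 1) (V' 0)" "tH' 1 = H'1" "tH' 2 = zro Cat (V' 3) (V' 2)" "tH' 3 = zro Cat (V' 4) (V' 3)"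
  by (simp_all add: topV_def Cmaps_def Dmaps_def Hmaps_def H'maps_def One_nat_def[symmetric])
lemmas cdefs = c_def p_def n_def sub_def
lemma main_zero: "cmp Cat (tK (Suc l)) (tK l) = zro Cat (tV l) (tV (Suc (Suc l)))"
proof -
  consider "l = 0" | "l = 1" | "l = 2" | "l = 3" | "l \<ge> 4" by linarith
  thus ?thesis
  proof cases
    case 1 thus ?thesis using Z0 by (simp add: tK0 tK1 topV_def One_nat_def[symmetric] c_def)
  next
    case 2 thus ?thesis using Z1 by (simp add: tK1 tK2 topV_def c_def)
  next
    case 3 thus ?thesis using Z2 by (simp add: tK2 tK3 topV_def c_def)
  next
    case 4 thus ?thesis using Z3 by (simp add: tK3 tK4 topV_def c_def)
  next
    case 5 thus ?thesis using Kz[of l] by (simp add: tK4 topV_def)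
  qed
qed

lemma main_eq: "tC l \<in> hom Cat (tV l) (V' l) \<and> tD l \<in> hom Cat (V' l) (tV l) \<and>
         tH l \<in> hom Cat (tV (Suc l)) (tV l) \<and> tH' l \<in> hom Cat (V' (Suc l)) (V' l) \<and>
         cmp Cat (K' l) (tC l) = cmp Cat (tC (Suc l)) (tK l) \<and>
         cmp Cat (tK l) (tD l) = cmp Cat (tD (Suc l)) (K' l) \<and>
         cmp Cat (tD l) (tC l) =
           sub Cat (sub Cat (idm Cat (tV l))
                      (if l = 0 then zro Cat (tV l) (tV l) else cmp Cat (tK (l - 1)) (tH (l - 1))))
                   (cmp Cat (tH l) (tK l)) \<and>
         cmp Cat (tC l) (tD l) =
           sub Cat (sub Cat (idm Cat (V' l))
                      (if l = 0 then zro Cat (V' l) (V' l) else cmp Cat (K' (l - 1)) (tH' (l - 1))))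
                   (cmp Cat (tH' l) (K' l))"
proof -
  consider "l = 0" | "l = 1" | "l = 2" | "l = 3" | "l \<ge> 4" by linarith
  thus ?thesis
  proof cases
    case 1 thus ?thesis using C0 D0 DC0 CD0
      by (simp add: tK0 evals One_nat_def[symmetric] cdefs)
  next
    case 2 thus ?thesis using C1eq D1eq DC1 CD1
      by (simp add: tK0 tK1 tD2 evals One_nat_def[symmetric] cdefs)
  next
    case 3 thus ?thesis using C2eq D2eq DC2 CD2
      by (simp add: tK1 tK2 tD2 tH2 evals One_nat_def[symmetric] cdefs)
  next
    case 4 thus ?thesis using C3eq D3eq DC3 CD3
      by (simp add: tK2 tK3 tH2 evals One_nat_def[symmetric] cdefs)
  next
    case 5
    have l1: "Suc (l - 1) = l" "l \<noteq> 0" using 5 by auto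
    have hk: "cmp Cat (tK (l - 1)) (tH (l - 1)) = zro Cat (V' l) (V' l)"
    proof -
      have "l - 1 \<noteq> 1" "l - 1 \<noteq> 2" using 5 by auto
      hence "tH (l - 1) = zro Cat (tV l) (tV (l - 1))" using l1 by (simp add: Hmaps_def)
      moreover have "tK (l - 1) \<in> hom Cat (tV (l - 1)) (tV l)" using main_hom[of "l - 1"] l1 by simp
      moreover have "tV l = V' l" using 5 by (simp add: topV_def)
      ultimately show ?thesis by (simp add: raw_zR)
    qed
    have hk': "cmp Cat (K' (l - 1)) (tH' (l - 1)) = zro Cat (V' l) (V' l)"
    proof -
      have "l - 1 \<noteq> 1" using 5 by auto
      hence "tH' (l - 1) = zro Cat (V' l) (V' (l - 1))" using l1 by (simp add: H'maps_def)
      moreover have "K' (l - 1) \<in> hom Cat (V' (l - 1)) (V' l)" using Kh[of "l - 1"] l1 by simp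
      ultimately show ?thesis by (simp add: raw_zR)
    qed
    have v: "tV l = V' l" "tV (Suc l) = V' (Suc l)" using 5 by (simp_all add: topV_def)
    have m: "tC l = idm Cat (V' l)" "tC (Suc l) = idm Cat (V' (Suc l))"
      "tD l = idm Cat (V' l)" "tD (Suc l) = idm Cat (V' (Suc l))"
      "tH l = zro Cat (V' (Suc l)) (V' l)" "tH' l = zro Cat (V' (Suc l)) (V' l)"
      "tK l = K' l"
      using 5 by (simp_all add: Cmaps_def Dmaps_def Hmaps_def H'maps_def topV_def tK4)
    have K: "K' l \<in> hom Cat (V' l) (V' (Suc l))" by (rule Kh)
    show ?thesis
      unfolding v m using l1 hk hk' K
      by (simp add: raw_id[OF id_hom] raw_id raw_zL raw_sz)
  qed
qed

lemma final: "full_compat_complex Cat tV tK \<and> equiv_htpy Cat tV tK V' K' tC tD tH tH'"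
proof
  show "equiv_htpy Cat tV tK V' K' tC tD tH tH'"
    unfolding equiv_htpy_def using main_eq by blast
  show "full_compat_complex Cat tV tK"
    unfolding full_compat_complex_def
  proof (intro allI conjI)
    fix l
    show "tK l \<in> hom Cat (tV l) (tV (Suc l))" by (rule main_hom)
    note e0 = main_eq[of l] and e1 = main_eq[of "Suc l"] and e2 = main_eq[of "Suc (Suc l)"]
    have bot: "complete_compat Cat (V' l) (V' (Suc l)) (V' (Suc (Suc l))) (K' l) (K' (Suc l))"
      using bottom unfolding full_compat_complex_def by blast
    show "complete_compat Cat (tV l) (tV (Suc l)) (tV (Suc (Suc l))) (tK l) (tK (Suc l))"
    proof (rule transfer[where Dl="tD l" and Dx="tD (Suc l)" and Cx="tC (Suc l)" and Cy="tC (Suc (Suc l))"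
         and Hy="tH (Suc l)" and Hx="tH l" and Kb="K' l" and Kbb="K' (Suc l)"])
      show "tK l \<in> hom Cat (tV l) (tV (Suc l))" by (rule main_hom)
      show "tK (Suc l) \<in> hom Cat (tV (Suc l)) (tV (Suc (Suc l)))" by (rule main_hom)
    qed (use e0 e1 e2 bot main_zero in simp_all)
  qed
qed
end

theorem lemma5p2:
  fixes Cat :: "('o, 'm) acat"
    and V1 :: 'o and V' :: "nat \<Rightarrow> 'o"
    and K' :: "nat \<Rightarrow> 'm" and K0 C1 D1 H'1 :: 'm
  assumes cat: "additive_cat Cat"
    and bottom: "full_compat_complex Cat V' K'"
    and K0: "K0 \<in> hom Cat (V' 0) V1"
    and C1: "C1 \<in> hom Cat V1 (V' 1)"
    and D1: "D1 \<in> hom Cat (V' 1) V1"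
    and H'1: "H'1 \<in> hom Cat (V' 2) (V' 1)"
    and CK: "cmp Cat C1 K0 = K' 0"
    and DK: "cmp Cat D1 (K' 0) = K0"
    and htpy: "sub Cat (idm Cat (V' 1)) (cmp Cat C1 D1) = cmp Cat H'1 (K' 1)"
  shows "full_compat_complex Cat (topV Cat V1 V') (topK Cat V1 V' K' K0 C1 D1 H'1) \<and>
         equiv_htpy Cat (topV Cat V1 V') (topK Cat V1 V' K' K0 C1 D1 H'1) V' K'
           (Cmaps Cat V1 V' C1) (Dmaps Cat V1 V' K' D1 H'1)
           (Hmaps Cat V1 V' K' D1) (H'maps Cat V' H'1)"
proof -
  interpret setup5 Cat V1 V' K' K0 C1 D1 H'1
    by (unfold_locales) (use assms in auto)
  show ?thesis by (rule final)
qed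

end
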